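(* Let $\sigma$ be a $d$-dimensional quantum state with $\sigma\ge\gamma I$ for some $\gamma>0$, let $\rho_1,\dots,\rho_T$ be $d$-dimensional quantum states and $\rho=\frac1T\sum_{t=1}^T\rho_t$. Then $$\frac1T\sum_{t=1}^T\big(1+D_{\chi^2}(\rho_t\,\|\,\sigma)\big)\le\sqrt{\frac d\gamma}\,D_{\chi^2}(\rho\,\|\,\sigma)^{1/2}+d.$$
   Context: Bures $\chi^2$-divergence: writing $\sigma=U\,\mathrm{diag}(q_1,\dots,q_d)U^\dagger$ with $U$ unitary and $\rho'=U^\dagger\rho U$, $D_{\chi^2}(\rho\,\|\,\sigma)=\sum_{i,j=1}^d\frac{2}{q_i+q_j}|\rho'_{ij}|^2-1$. *)

theory Defs
  imports "Jordan_Normal_Form.Matrix"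
begin

definition adj :: "complex mat \<Rightarrow> complex mat" where
  "adj A = mat (dim_col A) (dim_row A) (\<lambda>(i,j). cnj (A $$ (j,i)))"

definition unitary_mat :: "nat \<Rightarrow> complex mat \<Rightarrow> bool" where
  "unitary_mat d U \<longleftrightarrow> U \<in> carrier_mat d d \<and> U * adj U = 1\<^sub>m d \<and> adj U * U = 1\<^sub>m d"

definition psd_mat :: "nat \<Rightarrow> complex mat \<Rightarrow> bool" where
  "psd_mat d A \<longleftrightarrow> A \<in> carrier_mat d d \<and> adj A = A \<and>
     (\<forall>v \<in> carrier_vec d. (\<Sum>i<d. cnj (v $ i) * (A *\<^sub>v v) $ i) \<in> \<real> \<and>
                            Re (\<Sum>i<d. cnj (v $ i) * (A *\<^sub>v v) $ i) \<ge> 0)"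

definition qstate :: "nat \<Rightarrow> complex mat \<Rightarrow> bool" where
  "qstate d \<rho> \<longleftrightarrow> psd_mat d \<rho> \<and> (\<Sum>i<d. \<rho> $$ (i,i)) = 1"

definition real_diag_mat :: "nat \<Rightarrow> (nat \<Rightarrow> real) \<Rightarrow> complex mat" where
  "real_diag_mat d q = mat d d (\<lambda>(i,j). if i = j then complex_of_real (q i) else 0)"

text \<open>The expression of the Bures chi^2 divergence w.r.t. a given eigen-decomposition
  sigma = U diag(q) U^dagger, with rho' = U^dagger rho U.\<close>
definition chi2_expr :: "nat \<Rightarrow> complex mat \<Rightarrow> complex mat \<Rightarrow> (nat \<Rightarrow> real) \<Rightarrow> real" where
  "chi2_expr d \<rho> U q =
     (let \<rho>' = adj U * \<rho> * U in
      (\<Sum>i<d. \<Sum>j<d. 2 / (q i + q j) * (cmod (\<rho>' $$ (i,j)))\<^sup>2) - 1)"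

definition bures_chi2 :: "nat \<Rightarrow> complex mat \<Rightarrow> complex mat \<Rightarrow> real" where
  "bures_chi2 d \<rho> \<sigma> =
     (let Uq = (SOME (U, q). unitary_mat d U \<and> \<sigma> = U * real_diag_mat d q * adj U)
      in chi2_expr d \<rho> (fst Uq) (snd Uq))"

end

theory Submission imports Defs "Jordan_Normal_Form.Schur_Decomposition" "HOL-Computational_Algebra.Fundamental_Theorem_Algebra" begin

lemma adj_dims[simp]: "dim_row (adj A) = dim_col A" "dim_col (adj A) = dim_row A"
  by (auto simp: adj_def)
lemma adj_carrier[simp]: "A \<in> carrier_mat n m \<Longrightarrow> adj A \<in> carrier_mat m n"
  by (intro carrier_matI) (simp_all add: carrier_matD)
lemma adj_index[simp]: "i < dim_col A \<Longrightarrow> j < dim_row A \<Longrightarrow> adj A $$ (i,j) = cnj (A $$ (j,i))"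
  by (simp add: adj_def)
lemma adj_adj[simp]: "adj (adj A) = A" by (rule eq_matI) auto
lemma adj_one[simp]: "adj (1\<^sub>m n) = 1\<^sub>m n" by (rule eq_matI) auto
lemma adj_mult: assumes "A \<in> carrier_mat n k" "B \<in> carrier_mat k m"
  shows "adj (A * B) = adj B * adj A"
proof (rule eq_matI)
  fix i j assume i: "i < dim_row (adj B * adj A)" and j: "j < dim_col (adj B * adj A)"
  have i': "i < m" and j': "j < n" using i j assms by auto
  have "adj (A * B) $$ (i,j) = cnj (row A j \<bullet> col B i)" using i' j' assms by simp
  also have "row A j \<bullet> col B i = (\<Sum>l\<in>{0..<k}. A $$ (j,l) * B $$ (l,i))"
    unfolding scalar_prod_def using i' j' assms by (intro sum.cong) auto
  also have "cnj \<dots> = (\<Sum>l\<in>{0..<k}. cnj (B $$ (l,i)) * cnj (A $$ (j,l)))"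
    by (simp add: mult.commute)
  also have "\<dots> = row (adj B) i \<bullet> col (adj A) j"
    unfolding scalar_prod_def using i' j' assms by (intro sum.cong) auto
  also have "\<dots> = (adj B * adj A) $$ (i,j)" using i' j' assms by simp
  finally show "adj (A * B) $$ (i,j) = (adj B * adj A) $$ (i,j)" .
qed (use assms in auto)

lemma unitary_of_cols:
  assumes us: "set us \<subseteq> carrier_vec n" "length us = n"
    and orth: "\<And>i j. i<n \<Longrightarrow> j<n \<Longrightarrow> us!j \<bullet>c us!i = (if i = j then 1 else 0)"
  shows "unitary_mat n (mat_of_cols n us)"
proof -
  let ?W = "mat_of_cols n us"
  have W: "?W \<in> carrier_mat n n" using us by auto
  have 1: "adj ?W * ?W = 1\<^sub>m n"
  proof (rule eq_matI)
    fix i j assume i: "i < dim_row (1\<^sub>m n)" and j: "j < dim_col (1\<^sub>m n)"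
    have ui: "us ! i \<in> carrier_vec n" "us ! j \<in> carrier_vec n" using us i j by auto
    have "(adj ?W * ?W) $$ (i,j) = (\<Sum>k<n. cnj (?W $$ (k,i)) * ?W $$ (k,j))"
      using i j W by (auto simp: scalar_prod_def lessThan_atLeast0 intro!: sum.cong)
    also have "\<dots> = us!j \<bullet>c us!i"
      using i j us ui by (auto simp: scalar_prod_def mat_of_cols_index lessThan_atLeast0 mult.commute intro!: sum.cong)
    also have "\<dots> = 1\<^sub>m n $$ (i,j)" using orth i j by auto
    finally show "(adj ?W * ?W) $$ (i,j) = 1\<^sub>m n $$ (i,j)" .
  qed (use W in auto)
  have 2: "?W * adj ?W = 1\<^sub>m n"
    by (rule mat_mult_left_right_inverse[OF adj_carrier[OF W] W 1])
  show ?thesis using W 1 2 unfolding unitary_mat_def by auto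
qed

lemma sesq_entry:
  fixes A U :: "complex mat"
  assumes A: "A \<in> carrier_mat n n" and U: "U \<in> carrier_mat n n" and i: "i < n" and j: "j < n"
  shows "(adj U * A * U) $$ (i,j) = (\<Sum>k<n. \<Sum>l<n. cnj (U$$(k,i)) * A$$(k,l) * U$$(l,j))"
proof -
  have d: "adj U * A \<in> carrier_mat n n" using A U by auto
  have inner: "(adj U * A) $$ (i,l) = (\<Sum>k<n. cnj (U$$(k,i)) * A$$(k,l))" if l: "l < n" for l
  proof -
    have "(adj U * A) $$ (i,l) = row (adj U) i \<bullet> col A l" using A U i l by simp
    also have "\<dots> = (\<Sum>k<n. cnj (U$$(k,i)) * A$$(k,l))"
      unfolding scalar_prod_def using A U i l by (intro sum.cong) auto
    finally show ?thesis .
  qed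
  have "(adj U * A * U) $$ (i,j) = row (adj U * A) i \<bullet> col U j" using d U i j by simp
  also have "\<dots> = (\<Sum>l<n. (adj U * A) $$ (i,l) * U$$(l,j))"
    unfolding scalar_prod_def using d U i j by (intro sum.cong) auto
  also have "\<dots> = (\<Sum>l<n. (\<Sum>k<n. cnj (U$$(k,i)) * A$$(k,l)) * U$$(l,j))"
    using inner by (intro sum.cong) auto
  finally have "(adj U * A * U) $$ (i,j) = (\<Sum>l<n. (\<Sum>k<n. cnj (U$$(k,i)) * A$$(k,l)) * U$$(l,j))" .
  also have "\<dots> = (\<Sum>l<n. \<Sum>k<n. cnj (U$$(k,i)) * A$$(k,l) * U$$(l,j))"
    by (simp add: sum_distrib_right)
  also have "\<dots> = (\<Sum>k<n. \<Sum>l<n. cnj (U$$(k,i)) * A$$(k,l) * U$$(l,j))"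
    by (rule sum.swap)
  finally show ?thesis .
qed

lemma cscalar_self:
  fixes w :: "complex vec"
  shows "w \<bullet>c w = complex_of_real (\<Sum>k<dim_vec w. (cmod (w$k))\<^sup>2)"
  unfolding scalar_prod_def of_real_sum lessThan_atLeast0
proof (rule sum.cong)
  show "{0..<dim_vec (conjugate w)} = {0..<dim_vec w}" by simp
  fix x assume "x \<in> {0..<dim_vec w}"
  hence c: "conjugate w $ x = cnj (w$x)" by simp
  show "w $ x * conjugate w $ x = complex_of_real ((cmod (w $ x))\<^sup>2)"
    unfolding c by (rule complex_norm_square[symmetric])
qed

lemma eigen_exists:
  fixes A :: "complex mat"
  assumes A: "A \<in> carrier_mat n n" and n: "n > 0"
  shows "\<exists>e. eigenvalue A e"
proof -
  have "degree (char_poly A) = n" using degree_monic_char_poly[OF A] by auto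
  hence "\<not> constant (poly (char_poly A))" using n by (simp add: constant_degree)
  then obtain z where "poly (char_poly A) z = 0" using fundamental_theorem_of_algebra by blast
  thus ?thesis using eigenvalue_root_char_poly[OF A] by auto
qed

lemma orthonormal_completion:
  fixes v :: "complex vec"
  assumes v: "v \<in> carrier_vec n" and v1: "v \<bullet>c v = 1"
  shows "\<exists>us. set us \<subseteq> carrier_vec n \<and> length us = n \<and> us ! 0 = v \<and>
     (\<forall>i<n. \<forall>j<n. us!j \<bullet>c us!i = (if i = j then 1 else 0))"
proof -
  interpret cof_vec_space n "TYPE(complex)" .
  have v0: "v \<noteq> 0\<^sub>v n" using v1 v by auto
  note bc = basis_completion[OF v v0]
  define ws where "ws = gram_schmidt n (basis_completion v)"
  have ws: "corthogonal ws" "set ws \<subseteq> carrier_vec n" "length ws = n"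
    using gram_schmidt_result[OF bc(2) bc(4) bc(5) ws_def] bc(6) by auto
  have n: "n > 0" using v1 v by (cases n) (auto simp: scalar_prod_def)
  obtain rest where bce: "basis_completion v = v # rest" 
    unfolding basis_completion_def Let_def by auto
  have hd: "ws ! 0 = v" using gram_schmidt_hd[OF v, of rest] ws(3) n
    unfolding ws_def bce by (cases "gram_schmidt n (v # rest)") auto
  define nr where "nr = (\<lambda>w::complex vec. Re (w \<bullet>c w))"
  have nrpos: "nr (ws!i) > 0" and nreq: "ws!i \<bullet>c ws!i = complex_of_real (nr (ws!i))" if i: "i < n" for i
  proof -
    have ne: "ws!i \<bullet>c ws!i \<noteq> 0" using corthogonalD[OF ws(1), of i i] i ws(3) by auto
    define S where "S = (\<Sum>k<dim_vec (ws!i). (cmod ((ws!i)$k))\<^sup>2)"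
    have e: "ws!i \<bullet>c ws!i = complex_of_real S" unfolding S_def by (rule cscalar_self)
    have "S \<ge> 0" unfolding S_def by (intro sum_nonneg) auto
    moreover have "S \<noteq> 0" using ne e by auto
    moreover have "nr (ws!i) = S" unfolding nr_def e by simp
    ultimately show "nr (ws!i) > 0" "ws!i \<bullet>c ws!i = complex_of_real (nr (ws!i))"
      using e by auto
  qed
  define us where "us = map (\<lambda>w. complex_of_real (1 / sqrt (nr w)) \<cdot>\<^sub>v w) ws"
  have us: "set us \<subseteq> carrier_vec n" "length us = n" using ws unfolding us_def by auto
  have nrv: "nr v = 1" unfolding nr_def using v1 by simp
  have us0: "us ! 0 = v" unfolding us_def using hd n ws(3) nrv by simp
  have orth: "us!j \<bullet>c us!i = (if i = j then 1 else 0)" if i: "i < n" and j: "j < n" for i j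
  proof -
    have wi: "ws!i \<in> carrier_vec n" "ws!j \<in> carrier_vec n" using ws i j by auto
    define cj where "cj = complex_of_real (1 / sqrt (nr (ws!j)))"
    define ci where "ci = complex_of_real (1 / sqrt (nr (ws!i)))"
    have uj: "us!j = cj \<cdot>\<^sub>v ws!j" "us!i = ci \<cdot>\<^sub>v ws!i"
      unfolding us_def cj_def ci_def using i j ws(3) by auto
    have cc: "conjugate ci = ci" unfolding ci_def by simp
    have "us!j \<bullet>c us!i = (cj \<cdot>\<^sub>v ws!j) \<bullet> (ci \<cdot>\<^sub>v conjugate (ws!i))"
      unfolding uj conjugate_smult_vec cc ..
    also have "\<dots> = cj * (ci * (ws!j \<bullet>c ws!i))"
      by (subst smult_scalar_prod_distrib[of _ n], use wi in auto)
    also have "\<dots> = complex_of_real (1 / sqrt (nr (ws!j))) * complex_of_real (1 / sqrt (nr (ws!i)))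
       * (ws!j \<bullet>c ws!i)" unfolding ci_def cj_def by (simp only: mult.assoc)
    finally have "us!j \<bullet>c us!i = complex_of_real (1 / sqrt (nr (ws!j))) * complex_of_real (1 / sqrt (nr (ws!i)))
       * (ws!j \<bullet>c ws!i)" .
    also have "\<dots> = (if i = j then 1 else 0)"
    proof (cases "i = j")
      case True
      have "nr (ws!i) > 0" using nrpos[OF i] .
      then show ?thesis using True nreq[OF i]
        by (simp flip: of_real_mult)
    next
      case False
      then show ?thesis using corthogonalD[OF ws(1), of j i] i j ws(3) by auto
    qed
    finally show ?thesis .
  qed
  show ?thesis using us us0 orth by blast
qed

lemma spectral:
  fixes A :: "complex mat"
  shows "A \<in> carrier_mat n n \<Longrightarrow> adj A = A \<Longrightarrow>
    \<exists>U q. unitary_mat n U \<and> A = U * real_diag_mat n q * adj U"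
proof (induction n arbitrary: A)
  case 0
  show ?case
    by (rule exI[of _ "1\<^sub>m 0"], rule exI[of _ "\<lambda>_. 0"])
       (use 0 in \<open>auto simp: unitary_mat_def real_diag_mat_def intro!: eq_matI\<close>)
next
  case (Suc m)
  have A: "A \<in> carrier_mat (Suc m) (Suc m)" using Suc.prems by auto
  have Ah: "adj A = A" using Suc.prems by auto
  obtain e where "eigenvalue A e" using eigen_exists[OF A] by auto
  then obtain v0 where ev: "eigenvector A v0 e" unfolding eigenvalue_def by auto
  hence v0: "v0 \<in> carrier_vec (Suc m)" "v0 \<noteq> 0\<^sub>v (Suc m)" "A *\<^sub>v v0 = e \<cdot>\<^sub>v v0"
    using A unfolding eigenvector_def by auto
  define S where "S = (\<Sum>k<dim_vec v0. (cmod (v0$k))\<^sup>2)"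
  have e0: "v0 \<bullet>c v0 = complex_of_real S" unfolding S_def by (rule cscalar_self)
  have "S \<ge> 0" unfolding S_def by (intro sum_nonneg) auto
  moreover have "v0 \<bullet>c v0 \<noteq> 0" using v0(1,2) by simp
  hence "S \<noteq> 0" using e0 by auto
  ultimately have Spos: "S > 0" by auto
  define c where "c = complex_of_real (1 / sqrt S)"
  define v where "v = c \<cdot>\<^sub>v v0"
  have vc: "v \<in> carrier_vec (Suc m)" using v0 unfolding v_def by auto
  have cc: "conjugate c = c" unfolding c_def by simp
  have v1: "v \<bullet>c v = 1"
  proof -
    have "v \<bullet>c v = (c \<cdot>\<^sub>v v0) \<bullet> (c \<cdot>\<^sub>v conjugate v0)"
      unfolding v_def conjugate_smult_vec cc ..
    also have "\<dots> = c * (c * (v0 \<bullet>c v0))"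
      by (subst smult_scalar_prod_distrib[of _ "Suc m"], use v0 in auto)
    also have "\<dots> = complex_of_real (1 / sqrt S * (1 / sqrt S) * S)"
      unfolding c_def e0 by (simp only: of_real_mult mult.assoc)
    also have "1 / sqrt S * (1 / sqrt S) * S = 1" using Spos by (simp add: field_simps)
    finally show ?thesis by simp
  qed
  have Av: "A *\<^sub>v v = e \<cdot>\<^sub>v v"
  proof -
    have "A *\<^sub>v v = c \<cdot>\<^sub>v (A *\<^sub>v v0)" unfolding v_def by (rule mult_mat_vec[OF A v0(1)])
    also have "\<dots> = c \<cdot>\<^sub>v (e \<cdot>\<^sub>v v0)" using v0 by simp
    also have "\<dots> = e \<cdot>\<^sub>v v" unfolding v_def by (simp add: smult_smult_assoc mult.commute)
    finally show ?thesis .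
  qed
  obtain us where us: "set us \<subseteq> carrier_vec (Suc m)" "length us = Suc m" "us ! 0 = v"
     "\<And>i j. i < Suc m \<Longrightarrow> j < Suc m \<Longrightarrow> us!j \<bullet>c us!i = (if i = j then 1 else 0)"
    using orthonormal_completion[OF vc v1] by blast
  define W where "W = mat_of_cols (Suc m) us"
  have Wu: "unitary_mat (Suc m) W" unfolding W_def by (rule unitary_of_cols[OF us(1,2) us(4)])
  have W: "W \<in> carrier_mat (Suc m) (Suc m)" and WW: "W * adj W = 1\<^sub>m (Suc m)"
    and WW': "adj W * W = 1\<^sub>m (Suc m)"
    using Wu unfolding unitary_mat_def by auto
  have aW: "adj W \<in> carrier_mat (Suc m) (Suc m)" using W by simp
  define A' where "A' = adj W * A * W"
  have A'c: "A' \<in> carrier_mat (Suc m) (Suc m)" unfolding A'_def using W A by auto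
  have A'h: "adj A' = A'"
  proof -
    have "adj A' = adj W * adj (adj W * A)"
      unfolding A'_def by (rule adj_mult[of _ "Suc m" "Suc m" _ "Suc m"]) (use W A in auto)
    also have "adj (adj W * A) = adj A * adj (adj W)"
      by (rule adj_mult[of _ "Suc m" "Suc m" _ "Suc m"]) (use W A in auto)
    also have "adj W * (adj A * adj (adj W)) = A'"
      unfolding Ah adj_adj A'_def by (rule assoc_mult_mat[symmetric, OF aW A W])
    finally show ?thesis .
  qed
  have hA: "A' $$ (i,j) = cnj (A' $$ (j,i))" if "i < Suc m" "j < Suc m" for i j
    using arg_cong[OF A'h, of "\<lambda>M. M $$ (i,j)"] that A'c by auto
  have col0: "A' $$ (i,0) = (if i = 0 then e else 0)" if i: "i < Suc m" for i
  proof -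
    have Av': "(\<Sum>l<Suc m. A$$(k,l) * W$$(l,0)) = e * v$k" if k: "k < Suc m" for k
    proof -
      have "(\<Sum>l<Suc m. A$$(k,l) * W$$(l,0)) = (A *\<^sub>v v) $ k"
        unfolding W_def using k A vc us(1,2,3)
        by (auto simp: scalar_prod_def mat_of_cols_index lessThan_atLeast0 intro!: sum.cong)
      also have "\<dots> = e * v$k" using Av k vc by simp
      finally show ?thesis .
    qed
    have "A' $$ (i,0) = (\<Sum>k<Suc m. \<Sum>l<Suc m. cnj (W$$(k,i)) * A$$(k,l) * W$$(l,0))"
      unfolding A'_def by (rule sesq_entry[OF A W i]) simp
    also have "\<dots> = (\<Sum>k<Suc m. cnj (W$$(k,i)) * (\<Sum>l<Suc m. A$$(k,l) * W$$(l,0)))"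
      by (simp only: sum_distrib_left mult.assoc)
    also have "\<dots> = (\<Sum>k<Suc m. cnj (W$$(k,i)) * (e * v$k))"
      using Av' by (intro sum.cong) auto
    also have "\<dots> = e * (v \<bullet>c us!i)"
    proof -
      have ui: "us!i \<in> carrier_vec (Suc m)" using us(1,2) i by auto
      show ?thesis
        unfolding W_def scalar_prod_def sum_distrib_left
      proof (rule sum.cong)
        show "{..<Suc m} = {0..<dim_vec (conjugate (us ! i))}" using ui by auto
        fix k assume "k \<in> {0..<dim_vec (conjugate (us ! i))}"
        hence k: "k < Suc m" using ui by auto
        show "cnj (mat_of_cols (Suc m) us $$ (k, i)) * (e * v $ k) = e * (v $ k * conjugate (us ! i) $ k)"
          using k ui i us(2) by (simp add: mat_of_cols_index ac_simps)
      qed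
    qed
    also have "\<dots> = (if i = 0 then e else 0)" using us(3) us(4)[of i 0] i by auto
    finally show ?thesis .
  qed
  have h00: "A' $$ (0,0) = cnj (A' $$ (0,0))" by (rule hA) auto
  have c00: "A' $$ (0,0) = e" using col0[of 0] by simp
  have ecnj: "cnj e = e" using h00 unfolding c00 by (rule sym)
  define er where "er = Re e"
  have eer: "e = complex_of_real er" unfolding er_def using ecnj by (simp add: complex_eq_iff)
  have row0: "A' $$ (0,j) = (if j = 0 then e else 0)" if j: "j < Suc m" for j
    using hA[of 0 j] col0[OF j] j ecnj by auto
  define A3 where "A3 = mat m m (\<lambda>(i,j). A' $$ (Suc i, Suc j))"
  have A3c: "A3 \<in> carrier_mat m m" unfolding A3_def by auto
  have A3h: "adj A3 = A3"
  proof (rule eq_matI)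
    fix i j assume i: "i < dim_row A3" and j: "j < dim_col A3"
    hence i': "i < m" and j': "j < m" using A3c by auto
    have "adj A3 $$ (i,j) = cnj (A' $$ (Suc j, Suc i))" using i' j' A3c by (simp add: A3_def)
    also have "\<dots> = A' $$ (Suc i, Suc j)" using hA[of "Suc i" "Suc j"] i' j' by simp
    also have "\<dots> = A3 $$ (i,j)" using i' j' by (simp add: A3_def)
    finally show "adj A3 $$ (i,j) = A3 $$ (i,j)" .
  qed (use A3c in auto)
  obtain U3 q3 where U3u: "unitary_mat m U3" and A3e: "A3 = U3 * real_diag_mat m q3 * adj U3"
    using Suc.IH[OF A3c A3h] by blast
  have U3: "U3 \<in> carrier_mat m m" and U3U3: "U3 * adj U3 = 1\<^sub>m m" and U3U3': "adj U3 * U3 = 1\<^sub>m m"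
    using U3u unfolding unitary_mat_def by auto
  define V where "V = four_block_mat (1\<^sub>m 1) (0\<^sub>m 1 m) (0\<^sub>m m 1) U3"
  define E where "E = real_diag_mat 1 (\<lambda>_. er)"
  define D3 where "D3 = real_diag_mat m q3"
  define q where "q = (\<lambda>i. if i = 0 then er else q3 (i - 1))"
  have Ec: "E \<in> carrier_mat 1 1" unfolding E_def real_diag_mat_def by auto
  have D3c: "D3 \<in> carrier_mat m m" unfolding D3_def real_diag_mat_def by auto
  have Vc: "V \<in> carrier_mat (Suc m) (Suc m)" unfolding V_def using U3 by auto
  have aV: "adj V = four_block_mat (1\<^sub>m 1) (0\<^sub>m 1 m) (0\<^sub>m m 1) (adj U3)"
    by (rule eq_matI) (use U3 in \<open>auto simp: V_def\<close>)
  have Dq: "real_diag_mat (Suc m) q = four_block_mat E (0\<^sub>m 1 m) (0\<^sub>m m 1) D3"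
    by (rule eq_matI) (auto simp: E_def D3_def q_def real_diag_mat_def)
  have A'b: "A' = four_block_mat E (0\<^sub>m 1 m) (0\<^sub>m m 1) A3"
  proof (rule eq_matI)
    fix i j assume i: "i < dim_row (four_block_mat E (0\<^sub>m 1 m) (0\<^sub>m m 1) A3)"
      and j: "j < dim_col (four_block_mat E (0\<^sub>m 1 m) (0\<^sub>m m 1) A3)"
    have i': "i < Suc m" and j': "j < Suc m" using i j Ec A3c by auto
    show "A' $$ (i,j) = four_block_mat E (0\<^sub>m 1 m) (0\<^sub>m m 1) A3 $$ (i,j)"
    proof (cases "i = 0")
      case True
      then show ?thesis using row0[OF j'] j' Ec A3c eer by (auto simp: E_def real_diag_mat_def)
    next
      case False
      show ?thesis
      proof (cases "j = 0")
        case True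
        then show ?thesis using col0[OF i'] i' False Ec A3c by auto
      next
        case False
        then show ?thesis using \<open>i \<noteq> 0\<close> i' j' Ec A3c by (auto simp: A3_def)
      qed
    qed
  qed (use A'c Ec A3c in auto)
  have VDV: "V * real_diag_mat (Suc m) q * adj V = A'"
  proof -
    have "V * real_diag_mat (Suc m) q = four_block_mat E (0\<^sub>m 1 m) (0\<^sub>m m 1) (U3 * D3)"
      unfolding V_def Dq
      by (subst mult_four_block_mat[of _ 1 1 _ m _ m _ _ 1 _ m]) (use Ec D3c U3 in auto)
    moreover have "four_block_mat E (0\<^sub>m 1 m) (0\<^sub>m m 1) (U3 * D3) * adj V
       = four_block_mat E (0\<^sub>m 1 m) (0\<^sub>m m 1) (U3 * D3 * adj U3)"
      unfolding aV
      by (subst mult_four_block_mat[of _ 1 1 _ m _ m _ _ 1 _ m]) (use Ec D3c U3 in auto)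
    ultimately show ?thesis unfolding A'b A3e D3_def by simp
  qed
  have VV: "V * adj V = 1\<^sub>m (Suc m)"
  proof -
    have "V * adj V = four_block_mat (1\<^sub>m 1) (0\<^sub>m 1 m) (0\<^sub>m m 1) (U3 * adj U3)"
      unfolding aV unfolding V_def
      by (subst mult_four_block_mat[of _ 1 1 _ m _ m _ _ 1 _ m]) (use U3 in auto)
    thus ?thesis unfolding U3U3 using four_block_one_mat[of 1 m] by simp
  qed
  have VV': "adj V * V = 1\<^sub>m (Suc m)"
  proof -
    have "adj V * V = four_block_mat (1\<^sub>m 1) (0\<^sub>m 1 m) (0\<^sub>m m 1) (adj U3 * U3)"
      unfolding aV unfolding V_def
      by (subst mult_four_block_mat[of _ 1 1 _ m _ m _ _ 1 _ m]) (use U3 in auto)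
    thus ?thesis unfolding U3U3' using four_block_one_mat[of 1 m] by simp
  qed
  have aVc: "adj V \<in> carrier_mat (Suc m) (Suc m)" using Vc by simp
  define D where "D = real_diag_mat (Suc m) q"
  have Dc: "D \<in> carrier_mat (Suc m) (Suc m)" unfolding D_def real_diag_mat_def by auto
  define U where "U = W * V"
  have Uc: "U \<in> carrier_mat (Suc m) (Suc m)" unfolding U_def using W Vc by auto
  have aU: "adj U = adj V * adj W" unfolding U_def by (rule adj_mult[OF W Vc])
  have UU: "U * adj U = 1\<^sub>m (Suc m)"
  proof -
    have "U * adj U = W * (V * (adj V * adj W))"
      unfolding aU unfolding U_def by (rule assoc_mult_mat[OF W Vc, of _ "Suc m"]) (use aVc aW in auto)
    also have "V * (adj V * adj W) = (V * adj V) * adj W"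
      by (rule assoc_mult_mat[symmetric, OF Vc aVc aW])
    finally show ?thesis unfolding VV using W WW by simp
  qed
  have UU': "adj U * U = 1\<^sub>m (Suc m)"
  proof -
    have "adj U * U = adj V * (adj W * (W * V))"
      unfolding aU unfolding U_def by (rule assoc_mult_mat[OF aVc aW, of _ "Suc m"]) (use W Vc in auto)
    also have "adj W * (W * V) = (adj W * W) * V"
      by (rule assoc_mult_mat[symmetric, OF aW W Vc])
    finally show ?thesis unfolding WW' using Vc VV' by simp
  qed
  have "U * D * adj U = W * ((V * D * adj V) * adj W)"
  proof -
    have "U * D * adj U = W * (V * D) * (adj V * adj W)"
      unfolding aU unfolding U_def using assoc_mult_mat[OF W Vc Dc] by simp
    also have "\<dots> = W * ((V * D) * (adj V * adj W))"
      by (rule assoc_mult_mat[OF W]) (use Vc Dc aVc aW in auto)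
    also have "(V * D) * (adj V * adj W) = (V * D * adj V) * adj W"
      by (rule assoc_mult_mat[symmetric]) (use Vc Dc aVc aW in auto)
    finally show ?thesis .
  qed
  also have "\<dots> = W * (A' * adj W)" unfolding D_def VDV ..
  also have "A' * adj W = adj W * A * (W * adj W)"
    unfolding A'_def by (rule assoc_mult_mat) (use aW A W in auto)
  also have "\<dots> = adj W * A" unfolding WW using aW A by simp
  also have "W * (adj W * A) = (W * adj W) * A"
    by (rule assoc_mult_mat[symmetric, OF W aW A])
  also have "\<dots> = A" unfolding WW using A by simp
  finally have "A = U * D * adj U" by simp
  moreover have "unitary_mat (Suc m) U" unfolding unitary_mat_def using Uc UU UU' by auto
  ultimately show ?case unfolding D_def by blast
qed

lemma adjUU_entry:
  fixes U :: "complex mat"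
  assumes U: "U \<in> carrier_mat d d" and i: "i < d" and j: "j < d"
  shows "(adj U * U) $$ (i,j) = (\<Sum>k<d. cnj (U$$(k,i)) * U$$(k,j))"
proof -
  have "(adj U * U) $$ (i,j) = row (adj U) i \<bullet> col U j" using U i j by simp
  also have "\<dots> = (\<Sum>k<d. cnj (U$$(k,i)) * U$$(k,j))"
    unfolding scalar_prod_def using U i j by (intro sum.cong) auto
  finally show ?thesis .
qed

lemma form_eq:
  fixes X :: "complex mat" and v :: "complex vec"
  assumes X: "X \<in> carrier_mat d d" and v: "v \<in> carrier_vec d"
  shows "(\<Sum>k<d. cnj (v $ k) * (X *\<^sub>v v) $ k) = (\<Sum>k<d. \<Sum>l<d. cnj (v$k) * X$$(k,l) * v$l)"
proof (rule sum.cong)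
  fix k assume "k \<in> {..<d}"
  hence k: "k < d" by simp
  have "(X *\<^sub>v v) $ k = (\<Sum>l<d. X$$(k,l) * v$l)"
    using X v k by (simp add: scalar_prod_def lessThan_atLeast0)
  thus "cnj (v $ k) * (X *\<^sub>v v) $ k = (\<Sum>l<d. cnj (v$k) * X$$(k,l) * v$l)"
    by (simp add: sum_distrib_left mult.assoc)
qed simp

lemma form_col:
  fixes X U :: "complex mat"
  assumes X: "X \<in> carrier_mat d d" and U: "U \<in> carrier_mat d d" and i: "i < d"
  shows "(\<Sum>k<d. cnj (col U i $ k) * (X *\<^sub>v col U i) $ k) = (adj U * X * U) $$ (i,i)"
proof -
  have "(\<Sum>k<d. cnj (col U i $ k) * (X *\<^sub>v col U i) $ k)
     = (\<Sum>k<d. \<Sum>l<d. cnj (col U i $ k) * X$$(k,l) * col U i $ l)"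
    by (rule form_eq[OF X]) (use U i in auto)
  also have "\<dots> = (\<Sum>k<d. \<Sum>l<d. cnj (U$$(k,i)) * X$$(k,l) * U$$(l,i))"
    using U i by (intro sum.cong) auto
  also have "\<dots> = (adj U * X * U) $$ (i,i)" by (rule sesq_entry[OF X U i i, symmetric])
  finally show ?thesis .
qed

lemma trace_inv:
  fixes X U :: "complex mat"
  assumes X: "X \<in> carrier_mat d d" and Uu: "unitary_mat d U"
  shows "(\<Sum>i<d. (adj U * X * U) $$ (i,i)) = (\<Sum>k<d. X $$ (k,k))"
proof -
  have U: "U \<in> carrier_mat d d" and UU: "U * adj U = 1\<^sub>m d" using Uu unfolding unitary_mat_def by auto
  have UUe: "(\<Sum>i<d. U$$(l,i) * cnj (U$$(k,i))) = (if l = k then 1 else 0)" if "l < d" "k < d" for l k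
  proof -
    have "(U * adj U) $$ (l,k) = row U l \<bullet> col (adj U) k" using U that by simp
    also have "\<dots> = (\<Sum>i<d. U$$(l,i) * cnj (U$$(k,i)))"
      unfolding scalar_prod_def using U that by (intro sum.cong) auto
    finally show ?thesis using UU that by simp
  qed
  have "(\<Sum>i<d. (adj U * X * U) $$ (i,i)) = (\<Sum>i<d. \<Sum>k<d. \<Sum>l<d. cnj (U$$(k,i)) * X$$(k,l) * U$$(l,i))"
    using sesq_entry[OF X U] by (intro sum.cong) auto
  also have "\<dots> = (\<Sum>k<d. \<Sum>i<d. \<Sum>l<d. cnj (U$$(k,i)) * X$$(k,l) * U$$(l,i))"
    by (rule sum.swap)
  also have "\<dots> = (\<Sum>k<d. \<Sum>l<d. \<Sum>i<d. cnj (U$$(k,i)) * X$$(k,l) * U$$(l,i))"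
    by (intro sum.cong refl sum.swap)
  also have "\<dots> = (\<Sum>k<d. \<Sum>l<d. X$$(k,l) * (\<Sum>i<d. U$$(l,i) * cnj (U$$(k,i))))"
    by (simp only: sum_distrib_left ac_simps)
  also have "\<dots> = (\<Sum>k<d. \<Sum>l<d. X$$(k,l) * (if l = k then 1 else 0))"
    using UUe by (intro sum.cong refl) auto
  also have "\<dots> = (\<Sum>k<d. X $$ (k,k))"
  proof (rule sum.cong[OF refl])
    fix k assume "k \<in> {..<d}"
    hence k: "k < d" by simp
    have "(\<Sum>l<d. X$$(k,l) * (if l = k then 1 else 0)) = (\<Sum>l<d. if l = k then X$$(k,k) else 0)"
      by (rule sum.cong) auto
    also have "\<dots> = X$$(k,k)" using k by simp
    finally show "(\<Sum>l<d. X$$(k,l) * (if l = k then 1 else 0)) = X$$(k,k)" .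
  qed
  finally show ?thesis .
qed

lemma diag_of_decomp:
  fixes \<sigma> U :: "complex mat"
  assumes Uu: "unitary_mat d U" and \<sigma>: "\<sigma> = U * real_diag_mat d q * adj U"
  shows "adj U * \<sigma> * U = real_diag_mat d q"
proof -
  have U: "U \<in> carrier_mat d d" and UU: "U * adj U = 1\<^sub>m d" and UU': "adj U * U = 1\<^sub>m d"
    using Uu unfolding unitary_mat_def by auto
  define D where "D = real_diag_mat d q"
  have D: "D \<in> carrier_mat d d" unfolding D_def real_diag_mat_def by auto
  have aU: "adj U \<in> carrier_mat d d" using U by simp
  have "adj U * (U * D * adj U) * U = adj U * (U * D * adj U * U)"
    by (rule assoc_mult_mat[OF aU]) (use U D aU in auto)
  also have "U * D * adj U * U = U * D * (adj U * U)"
    by (rule assoc_mult_mat) (use U D aU in auto)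
  also have "\<dots> = U * D" unfolding UU' using U D by simp
  also have "adj U * (U * D) = (adj U * U) * D" by (rule assoc_mult_mat[symmetric, OF aU U D])
  also have "\<dots> = D" unfolding UU' using D by simp
  finally show ?thesis unfolding \<sigma> D_def .
qed

lemma q_lower:
  fixes \<sigma> U :: "complex mat"
  assumes Uu: "unitary_mat d U" and \<sigma>: "\<sigma> = U * real_diag_mat d q * adj U"
    and psd: "psd_mat d (\<sigma> - complex_of_real \<gamma> \<cdot>\<^sub>m 1\<^sub>m d)" and i: "i < d"
  shows "q i \<ge> \<gamma>"
proof -
  have U: "U \<in> carrier_mat d d" and UU': "adj U * U = 1\<^sub>m d"
    using Uu unfolding unitary_mat_def by auto
  have aU: "adj U \<in> carrier_mat d d" using U by simp
  define D where "D = real_diag_mat d q"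
  have D: "D \<in> carrier_mat d d" unfolding D_def real_diag_mat_def by auto
  have sc: "\<sigma> \<in> carrier_mat d d" unfolding \<sigma> using U D_def D by auto
  define c where "c = complex_of_real \<gamma>"
  have cI: "c \<cdot>\<^sub>m 1\<^sub>m d \<in> carrier_mat d d" by auto
  have "adj U * (\<sigma> - c \<cdot>\<^sub>m 1\<^sub>m d) = adj U * \<sigma> - adj U * (c \<cdot>\<^sub>m 1\<^sub>m d)"
    by (rule mult_minus_distrib_mat[OF aU sc cI])
  also have "adj U * (c \<cdot>\<^sub>m 1\<^sub>m d) = c \<cdot>\<^sub>m adj U"
    using mult_smult_distrib[OF aU one_carrier_mat, of c] right_mult_one_mat[OF aU] by simp
  finally have 1: "adj U * (\<sigma> - c \<cdot>\<^sub>m 1\<^sub>m d) = adj U * \<sigma> - c \<cdot>\<^sub>m adj U" .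
  have "adj U * (\<sigma> - c \<cdot>\<^sub>m 1\<^sub>m d) * U = (adj U * \<sigma>) * U - (c \<cdot>\<^sub>m adj U) * U"
    unfolding 1 by (rule minus_mult_distrib_mat) (use aU sc U in auto)
  also have "(c \<cdot>\<^sub>m adj U) * U = c \<cdot>\<^sub>m 1\<^sub>m d"
    using mult_smult_assoc_mat[OF aU U, of c] UU' by simp
  also have "(adj U * \<sigma>) * U = D" using diag_of_decomp[OF Uu \<sigma>] D_def by simp
  finally have 2: "adj U * (\<sigma> - c \<cdot>\<^sub>m 1\<^sub>m d) * U = D - c \<cdot>\<^sub>m 1\<^sub>m d" .
  have M: "\<sigma> - c \<cdot>\<^sub>m 1\<^sub>m d \<in> carrier_mat d d" using sc by auto
  have v: "col U i \<in> carrier_vec d" using U i by auto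
  have "(\<Sum>k<d. cnj (col U i $ k) * ((\<sigma> - c \<cdot>\<^sub>m 1\<^sub>m d) *\<^sub>v col U i) $ k) = complex_of_real (q i - \<gamma>)"
    unfolding form_col[OF M U i] 2 using i D by (simp add: D_def real_diag_mat_def c_def)
  moreover have "Re (\<Sum>k<d. cnj (col U i $ k) * ((\<sigma> - c \<cdot>\<^sub>m 1\<^sub>m d) *\<^sub>v col U i) $ k) \<ge> 0"
    using psd v unfolding psd_mat_def c_def by blast
  ultimately show ?thesis by simp
qed

lemma herm_transform:
  fixes X U :: "complex mat"
  assumes X: "X \<in> carrier_mat d d" and Xh: "adj X = X" and U: "U \<in> carrier_mat d d"
    and i: "i < d" and j: "j < d"
  shows "(adj U * X * U) $$ (j,i) = cnj ((adj U * X * U) $$ (i,j))"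
proof -
  have aU: "adj U \<in> carrier_mat d d" using U by simp
  have "adj (adj U * X * U) = adj U * adj (adj U * X)"
    by (rule adj_mult[of _ d d _ d]) (use aU X U in auto)
  also have "adj (adj U * X) = adj X * adj (adj U)"
    by (rule adj_mult[of _ d d _ d]) (use aU X U in auto)
  also have "adj U * (adj X * adj (adj U)) = adj U * X * U"
    unfolding Xh adj_adj by (rule assoc_mult_mat[symmetric, OF aU X U])
  finally have h: "adj (adj U * X * U) = adj U * X * U" .
  have "(adj U * X * U) $$ (j,i) = adj (adj U * X * U) $$ (j,i)" unfolding h ..
  also have "\<dots> = cnj ((adj U * X * U) $$ (i,j))" using aU X U i j by simp
  finally show ?thesis .
qed

lemma psd_diag:
  fixes X U :: "complex mat"
  assumes psd: "psd_mat d X" and U: "U \<in> carrier_mat d d" and i: "i < d"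
  shows "(adj U * X * U) $$ (i,i) = complex_of_real (Re ((adj U * X * U) $$ (i,i)))"
    and "Re ((adj U * X * U) $$ (i,i)) \<ge> 0"
proof -
  have X: "X \<in> carrier_mat d d" using psd unfolding psd_mat_def by auto
  have v: "col U i \<in> carrier_vec d" using U i by auto
  have "(\<Sum>k<d. cnj (col U i $ k) * (X *\<^sub>v col U i) $ k) \<in> \<real> \<and>
        Re (\<Sum>k<d. cnj (col U i $ k) * (X *\<^sub>v col U i) $ k) \<ge> 0"
    using psd v unfolding psd_mat_def by blast
  hence "(adj U * X * U) $$ (i,i) \<in> \<real>" "Re ((adj U * X * U) $$ (i,i)) \<ge> 0"
    unfolding form_col[OF X U i] by auto
  thus "(adj U * X * U) $$ (i,i) = complex_of_real (Re ((adj U * X * U) $$ (i,i)))"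
    "Re ((adj U * X * U) $$ (i,i)) \<ge> 0" by (auto simp: Reals_def)
qed

lemma form_expand:
  fixes X U :: "complex mat" and c :: complex
  assumes X: "X \<in> carrier_mat d d" and U: "U \<in> carrier_mat d d" and i: "i < d" and j: "j < d"
  defines "w \<equiv> col U i + c \<cdot>\<^sub>v col U j"
  defines "R \<equiv> adj U * X * U"
  shows "(\<Sum>k<d. cnj (w $ k) * (X *\<^sub>v w) $ k)
     = R$$(i,i) + c * R$$(i,j) + cnj c * R$$(j,i) + (cnj c * c) * R$$(j,j)"
proof -
  have w: "w \<in> carrier_vec d" unfolding w_def using U i j by auto
  have wk: "w $ k = U$$(k,i) + c * U$$(k,j)" if "k < d" for k
    unfolding w_def using U i j that by simp
  have "(\<Sum>k<d. cnj (w $ k) * (X *\<^sub>v w) $ k) = (\<Sum>k<d. \<Sum>l<d. cnj (w$k) * X$$(k,l) * w$l)"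
    by (rule form_eq[OF X w])
  also have "\<dots> = (\<Sum>k<d. \<Sum>l<d.
        cnj (U$$(k,i)) * X$$(k,l) * U$$(l,i) + c * (cnj (U$$(k,i)) * X$$(k,l) * U$$(l,j))
      + cnj c * (cnj (U$$(k,j)) * X$$(k,l) * U$$(l,i)) + (cnj c * c) * (cnj (U$$(k,j)) * X$$(k,l) * U$$(l,j)))"
    by (intro sum.cong refl) (simp add: wk algebra_simps)
  also have "\<dots> = (\<Sum>k<d. \<Sum>l<d. cnj (U$$(k,i)) * X$$(k,l) * U$$(l,i))
      + c * (\<Sum>k<d. \<Sum>l<d. cnj (U$$(k,i)) * X$$(k,l) * U$$(l,j))
      + cnj c * (\<Sum>k<d. \<Sum>l<d. cnj (U$$(k,j)) * X$$(k,l) * U$$(l,i))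
      + (cnj c * c) * (\<Sum>k<d. \<Sum>l<d. cnj (U$$(k,j)) * X$$(k,l) * U$$(l,j))"
    by (simp only: sum.distrib sum_distrib_left)
  also have "\<dots> = R$$(i,i) + c * R$$(i,j) + cnj c * R$$(j,i) + (cnj c * c) * R$$(j,j)"
    unfolding R_def using sesq_entry[OF X U] i j by simp
  finally show ?thesis .
qed

lemma cs_aux:
  fixes a b :: real and z :: complex
  assumes a: "a \<ge> 0" and b: "b \<ge> 0"
    and H: "\<And>c. 0 \<le> a + 2 * Re (c * z) + (cmod c)\<^sup>2 * b"
  shows "(cmod z)\<^sup>2 \<le> a * b"
proof (cases "b > 0")
  case True
  define c where "c = - cnj z / complex_of_real b"
  have "Re (c * z) = - (cmod z)\<^sup>2 / b"
    unfolding c_def using True by (simp add: cmod_power2[unfolded power2_eq_square] power2_eq_square mult.commute diff_divide_distrib add_divide_distrib)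
  moreover have "(cmod c)\<^sup>2 = (cmod z)\<^sup>2 / b\<^sup>2"
    unfolding c_def using True by (simp add: norm_divide power_divide)
  ultimately have "0 \<le> a - 2 * (cmod z)\<^sup>2 / b + (cmod z)\<^sup>2 / b\<^sup>2 * b" using H[of c] by simp
  also have "(cmod z)\<^sup>2 / b\<^sup>2 * b = (cmod z)\<^sup>2 / b" using True by (simp add: power2_eq_square)
  finally have "0 \<le> a - (cmod z)\<^sup>2 / b" by simp
  hence "(cmod z)\<^sup>2 / b \<le> a" by simp
  thus ?thesis using True by (simp add: divide_le_eq mult.commute)
next
  case False
  hence b0: "b = 0" using b by simp
  have "z = 0"
  proof (rule ccontr)
    assume z: "z \<noteq> 0"
    hence zp: "(cmod z)\<^sup>2 > 0" by simp
    define t where "t = (a + 1) / (2 * (cmod z)\<^sup>2)"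
    define c where "c = - complex_of_real t * cnj z"
    have "Re (c * z) = - t * (cmod z)\<^sup>2"
      unfolding c_def by (simp add: cmod_power2[unfolded power2_eq_square] power2_eq_square algebra_simps)
    hence "0 \<le> a - 2 * t * (cmod z)\<^sup>2" using H[of c] b0 by simp
    also have "2 * t * (cmod z)\<^sup>2 = a + 1" unfolding t_def using zp by simp
    finally show False by simp
  qed
  thus ?thesis using a b0 by simp
qed

lemma psd_cs:
  fixes X U :: "complex mat"
  assumes psd: "psd_mat d X" and U: "U \<in> carrier_mat d d" and i: "i < d" and j: "j < d"
  shows "(cmod ((adj U * X * U) $$ (i,j)))\<^sup>2
     \<le> Re ((adj U * X * U) $$ (i,i)) * Re ((adj U * X * U) $$ (j,j))"
proof -
  define R where "R = adj U * X * U"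
  have X: "X \<in> carrier_mat d d" and Xh: "adj X = X" using psd unfolding psd_mat_def by auto
  have Ri: "R$$(i,i) = complex_of_real (Re (R$$(i,i)))" "Re (R$$(i,i)) \<ge> 0"
    using psd_diag[OF psd U i] unfolding R_def by auto
  have Rj: "R$$(j,j) = complex_of_real (Re (R$$(j,j)))" "Re (R$$(j,j)) \<ge> 0"
    using psd_diag[OF psd U j] unfolding R_def by auto
  have Rji: "R$$(j,i) = cnj (R$$(i,j))" unfolding R_def by (rule herm_transform[OF X Xh U i j])
  show ?thesis unfolding R_def[symmetric]
  proof (rule cs_aux[OF Ri(2) Rj(2)])
    fix c :: complex
    define w where "w = col U i + c \<cdot>\<^sub>v col U j"
    have w: "w \<in> carrier_vec d" unfolding w_def using U i j by auto
    have "Re (\<Sum>k<d. cnj (w $ k) * (X *\<^sub>v w) $ k) \<ge> 0"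
      using psd w unfolding psd_mat_def by blast
    also have "(\<Sum>k<d. cnj (w $ k) * (X *\<^sub>v w) $ k)
       = R$$(i,i) + c * R$$(i,j) + cnj c * R$$(j,i) + (cnj c * c) * R$$(j,j)"
      unfolding w_def R_def by (rule form_expand[OF X U i j])
    also have "Re \<dots> = Re (R$$(i,i)) + 2 * Re (c * R$$(i,j)) + (cmod c)\<^sup>2 * Re (R$$(j,j))"
    proof -
      have "Re (cnj c * R$$(j,i)) = Re (c * R$$(i,j))" unfolding Rji
        by (simp flip: complex_cnj_mult)
      moreover have "Re ((cnj c * c) * R$$(j,j)) = (cmod c)\<^sup>2 * Re (R$$(j,j))"
        by (subst Rj(1)) (simp add: complex_norm_square[symmetric] mult.commute)
      ultimately show ?thesis by simp
    qed
    finally show "0 \<le> Re (R$$(i,i)) + 2 * Re (c * R$$(i,j)) + (cmod c)\<^sup>2 * Re (R$$(j,j))" .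
  qed
qed

lemma hm_am:
  fixes x y :: real
  assumes x: "x > 0" and y: "y > 0"
  shows "2 / (x + y) \<le> (1 / x + 1 / y) / 2"
proof -
  have sq: "0 \<le> (x - y)\<^sup>2" by simp
  have "2 / (x + y) \<le> (1 / x + 1 / y) / 2 \<longleftrightarrow> 4 * (x * y) \<le> (x + y) * (x + y)"
    using x y by (simp add: field_simps)
  also have "\<dots>" using sq by (simp add: power2_eq_square algebra_simps)
  finally show ?thesis .
qed

lemma cs_real:
  fixes x y :: "nat \<Rightarrow> real" and A :: "nat set"
  assumes A: "finite A"
  shows "(\<Sum>i\<in>A. x i * y i)\<^sup>2 \<le> (\<Sum>i\<in>A. (x i)\<^sup>2) * (\<Sum>i\<in>A. (y i)\<^sup>2)"
proof (cases "(\<Sum>i\<in>A. (y i)\<^sup>2) = 0")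
  case True
  hence "\<forall>i\<in>A. (y i)\<^sup>2 = 0" using A by (subst sum_nonneg_eq_0_iff[symmetric]) auto
  hence "\<forall>i\<in>A. y i = 0" by simp
  hence "(\<Sum>i\<in>A. x i * y i) = 0" by simp
  thus ?thesis using True by simp
next
  case False
  define Y where "Y = (\<Sum>i\<in>A. (y i)\<^sup>2)"
  define X where "X = (\<Sum>i\<in>A. (x i)\<^sup>2)"
  define P where "P = (\<Sum>i\<in>A. x i * y i)"
  have Yp: "Y > 0" using False unfolding Y_def by (metis sum_nonneg zero_le_power2 order_le_less)
  define t where "t = P / Y"
  have "0 \<le> (\<Sum>i\<in>A. (x i - t * y i)\<^sup>2)" by (intro sum_nonneg) auto
  also have "(\<Sum>i\<in>A. (x i - t * y i)\<^sup>2) = X - 2 * t * P + t\<^sup>2 * Y"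
    unfolding X_def Y_def P_def
    by (simp add: power2_eq_square algebra_simps sum.distrib sum_subtractf sum_distrib_left)
  also have "\<dots> = X - P\<^sup>2 / Y" unfolding t_def using Yp by (simp add: power2_eq_square field_simps)
  finally have "P\<^sup>2 / Y \<le> X" by simp
  hence "P\<^sup>2 \<le> X * Y" using Yp by (simp add: divide_le_eq)
  thus ?thesis unfolding X_def Y_def P_def .
qed

lemma chi2_sum_bound:
  fixes X U :: "complex mat" and q :: "nat \<Rightarrow> real"
  assumes psd: "psd_mat d X" and tr: "(\<Sum>k<d. X$$(k,k)) = 1" and Uu: "unitary_mat d U"
    and qpos: "\<And>i. i < d \<Longrightarrow> q i > 0"
  shows "(\<Sum>i<d. \<Sum>j<d. 2 / (q i + q j) * (cmod ((adj U * X * U) $$ (i,j)))\<^sup>2)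
      \<le> (\<Sum>i<d. Re ((adj U * X * U) $$ (i,i)) / q i)"
proof -
  have U: "U \<in> carrier_mat d d" using Uu unfolding unitary_mat_def by auto
  have X: "X \<in> carrier_mat d d" using psd unfolding psd_mat_def by auto
  define R where "R = adj U * X * U"
  define a where "a = (\<lambda>i. Re (R $$ (i,i)))"
  have a0: "a i \<ge> 0" if "i < d" for i unfolding a_def R_def using psd_diag(2)[OF psd U that] .
  have asum: "(\<Sum>i<d. a i) = 1"
  proof -
    have "(\<Sum>i<d. a i) = Re (\<Sum>i<d. R $$ (i,i))" unfolding a_def by simp
    also have "(\<Sum>i<d. R $$ (i,i)) = 1" unfolding R_def trace_inv[OF X Uu] tr ..
    finally show ?thesis by simp
  qed
  have "(\<Sum>i<d. \<Sum>j<d. 2 / (q i + q j) * (cmod (R $$ (i,j)))\<^sup>2)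
      \<le> (\<Sum>i<d. \<Sum>j<d. 2 / (q i + q j) * (a i * a j))"
  proof (intro sum_mono)
    fix i j assume i: "i \<in> {..<d}" and j: "j \<in> {..<d}"
    have "(cmod (R $$ (i,j)))\<^sup>2 \<le> a i * a j" unfolding a_def R_def
      by (rule psd_cs[OF psd U]) (use i j in auto)
    moreover have "2 / (q i + q j) \<ge> 0" using qpos[of i] qpos[of j] i j by simp
    ultimately show "2 / (q i + q j) * (cmod (R $$ (i,j)))\<^sup>2 \<le> 2 / (q i + q j) * (a i * a j)"
      by (rule mult_left_mono)
  qed
  also have "\<dots> \<le> (\<Sum>i<d. \<Sum>j<d. ((1 / q i + 1 / q j) / 2) * (a i * a j))"
  proof (intro sum_mono)
    fix i j assume i: "i \<in> {..<d}" and j: "j \<in> {..<d}"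
    have "2 / (q i + q j) \<le> (1 / q i + 1 / q j) / 2" using hm_am qpos i j by auto
    moreover have "a i * a j \<ge> 0" using a0 i j by simp
    ultimately show "2 / (q i + q j) * (a i * a j) \<le> ((1 / q i + 1 / q j) / 2) * (a i * a j)"
      by (rule mult_right_mono)
  qed
  also have "\<dots> = (\<Sum>i<d. \<Sum>j<d. ((a i / q i) * a j + a i * (a j / q j)) / 2)"
    by (intro sum.cong refl) (simp add: algebra_simps add_divide_distrib)
  also have "\<dots> = ((\<Sum>i<d. \<Sum>j<d. (a i / q i) * a j) + (\<Sum>i<d. \<Sum>j<d. a i * (a j / q j))) / 2"
    by (simp only: sum_divide_distrib[symmetric] sum.distrib)
  also have "\<dots> = ((\<Sum>i<d. a i / q i) * (\<Sum>j<d. a j) + (\<Sum>i<d. a i) * (\<Sum>j<d. a j / q j)) / 2"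
    by (simp only: sum_product)
  also have "\<dots> = (\<Sum>i<d. a i / q i)" unfolding asum by simp
  finally show ?thesis unfolding R_def a_def .
qed

lemma avg_entry:
  fixes U :: "complex mat" and \<rho>s :: "nat \<Rightarrow> complex mat"
  assumes U: "U \<in> carrier_mat d d" and i: "i < d" and j: "j < d"
    and \<rho>c: "\<And>t. t \<in> {1..T} \<Longrightarrow> \<rho>s t \<in> carrier_mat d d"
  shows "(adj U * mat d d (\<lambda>ij. (1 / of_nat T) * (\<Sum>t = 1..T. \<rho>s t $$ ij)) * U) $$ (i,j)
     = (1 / of_nat T) * (\<Sum>t = 1..T. (adj U * \<rho>s t * U) $$ (i,j))"
proof -
  define \<rho> where "\<rho> = mat d d (\<lambda>ij. (1 / of_nat T) * (\<Sum>t = 1..T. \<rho>s t $$ ij))"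
  have \<rho>c': "\<rho> \<in> carrier_mat d d" unfolding \<rho>_def by auto
  have "(adj U * \<rho> * U) $$ (i,j) = (\<Sum>k<d. \<Sum>l<d. cnj (U$$(k,i)) * \<rho>$$(k,l) * U$$(l,j))"
    by (rule sesq_entry[OF \<rho>c' U i j])
  also have "\<dots> = (\<Sum>k<d. \<Sum>l<d. \<Sum>t = 1..T. (1 / of_nat T) * (cnj (U$$(k,i)) * \<rho>s t $$ (k,l) * U$$(l,j)))"
  proof (intro sum.cong refl)
    fix k l assume k: "k \<in> {..<d}" and l: "l \<in> {..<d}"
    have "\<rho>$$(k,l) = (1 / of_nat T) * (\<Sum>t = 1..T. \<rho>s t $$ (k,l))" unfolding \<rho>_def using k l by simp
    thus "cnj (U$$(k,i)) * \<rho>$$(k,l) * U$$(l,j)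
        = (\<Sum>t = 1..T. (1 / of_nat T) * (cnj (U$$(k,i)) * \<rho>s t $$ (k,l) * U$$(l,j)))"
      by (simp add: sum_distrib_left sum_distrib_right ac_simps)
  qed
  also have "\<dots> = (\<Sum>k<d. \<Sum>t = 1..T. \<Sum>l<d. (1 / of_nat T) * (cnj (U$$(k,i)) * \<rho>s t $$ (k,l) * U$$(l,j)))"
    by (intro sum.cong refl sum.swap)
  also have "\<dots> = (\<Sum>t = 1..T. \<Sum>k<d. \<Sum>l<d. (1 / of_nat T) * (cnj (U$$(k,i)) * \<rho>s t $$ (k,l) * U$$(l,j)))"
    by (rule sum.swap)
  also have "\<dots> = (1 / of_nat T) * (\<Sum>t = 1..T. \<Sum>k<d. \<Sum>l<d. cnj (U$$(k,i)) * \<rho>s t $$ (k,l) * U$$(l,j))"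
    by (simp only: sum_distrib_left)
  also have "\<dots> = (1 / of_nat T) * (\<Sum>t = 1..T. (adj U * \<rho>s t * U) $$ (i,j))"
    using sesq_entry[OF \<rho>c U i j] by simp
  finally show ?thesis unfolding \<rho>_def .
qed

lemma final_real:
  fixes q a :: "nat \<Rightarrow> real" and d :: nat and \<gamma> C :: real
  assumes qge: "\<And>i. i < d \<Longrightarrow> q i \<ge> \<gamma>" and g: "\<gamma> > 0"
    and qsum: "(\<Sum>i<d. q i) = 1" and asum: "(\<Sum>i<d. a i) = 1"
    and C: "(\<Sum>i<d. (a i)\<^sup>2 / q i) - 1 \<le> C"
  shows "(\<Sum>i<d. a i / q i) \<le> sqrt (real d / \<gamma>) * sqrt C + real d"
proof -
  have qp: "q i > 0" if "i < d" for i using qge[OF that] g by simp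
  define e where "e = (\<lambda>i. a i - q i)"
  have s1: "(\<Sum>i<d. a i / q i) - real d = (\<Sum>i<d. e i / q i)"
  proof -
    have "(\<Sum>i<d. e i / q i) = (\<Sum>i<d. a i / q i - 1)"
      unfolding e_def using qp by (intro sum.cong refl) (auto simp add: diff_divide_distrib dest: qp)
    also have "\<dots> = (\<Sum>i<d. a i / q i) - real d" by (simp add: sum_subtractf)
    finally show ?thesis by simp
  qed
  have s2: "(\<Sum>i<d. (a i)\<^sup>2 / q i) - 1 = (\<Sum>i<d. (e i)\<^sup>2 / q i)"
  proof -
    have "(\<Sum>i<d. (e i)\<^sup>2 / q i) = (\<Sum>i<d. (a i)\<^sup>2 / q i - 2 * a i + q i)"
      unfolding e_def using qp by (intro sum.cong refl) (auto simp add: power2_eq_square field_simps dest!: qp)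
    also have "\<dots> = (\<Sum>i<d. (a i)\<^sup>2 / q i) - 2 * (\<Sum>i<d. a i) + (\<Sum>i<d. q i)"
      by (simp add: sum.distrib sum_subtractf sum_distrib_left)
    finally show ?thesis using asum qsum by simp
  qed
  have cs: "(\<Sum>i<d. (e i / sqrt (q i)) * (1 / sqrt (q i)))\<^sup>2
      \<le> (\<Sum>i<d. (e i / sqrt (q i))\<^sup>2) * (\<Sum>i<d. (1 / sqrt (q i))\<^sup>2)"
    by (rule cs_real) simp
  have c1: "(\<Sum>i<d. (e i / sqrt (q i)) * (1 / sqrt (q i))) = (\<Sum>i<d. e i / q i)"
    using qp by (intro sum.cong refl) (auto simp add: real_sqrt_mult[symmetric] dest!: qp)
  have c2: "(\<Sum>i<d. (e i / sqrt (q i))\<^sup>2) = (\<Sum>i<d. (e i)\<^sup>2 / q i)"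
    using qp by (intro sum.cong refl) (auto simp add: power_divide dest!: qp)
  have c3: "(\<Sum>i<d. (1 / sqrt (q i))\<^sup>2) = (\<Sum>i<d. 1 / q i)"
    using qp by (intro sum.cong refl) (auto simp add: power_divide dest!: qp)
  have c4: "(\<Sum>i<d. 1 / q i) \<le> real d / \<gamma>"
  proof -
    have "(\<Sum>i<d. 1 / q i) \<le> (\<Sum>i<d. 1 / \<gamma>)"
      using qge qp g by (intro sum_mono) (simp add: frac_le)
    thus ?thesis by simp
  qed
  have E0: "(\<Sum>i<d. (e i)\<^sup>2 / q i) \<ge> 0" by (intro sum_nonneg divide_nonneg_pos) (auto dest!: qp)
  have N0: "(\<Sum>i<d. 1 / q i) \<ge> 0" by (intro sum_nonneg divide_nonneg_pos) (auto dest!: qp)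
  have EC: "(\<Sum>i<d. (e i)\<^sup>2 / q i) \<le> C" using C s2 by simp
  have "(\<Sum>i<d. e i / q i)\<^sup>2 \<le> (\<Sum>i<d. (e i)\<^sup>2 / q i) * (\<Sum>i<d. 1 / q i)"
    using cs unfolding c1 c2 c3 .
  also have "\<dots> \<le> C * (real d / \<gamma>)"
    by (rule mult_mono[OF EC c4]) (use E0 EC N0 in auto)
  finally have "(\<Sum>i<d. e i / q i) \<le> sqrt (C * (real d / \<gamma>))" by (rule real_le_rsqrt)
  also have "\<dots> = sqrt (real d / \<gamma>) * sqrt C" by (simp only: real_sqrt_mult mult.commute)
  finally show ?thesis using s1 by simp
qed

theorem lemma8p5:
  fixes d T :: nat and \<gamma> :: real and \<sigma> :: "complex mat" and \<rho>s :: "nat \<Rightarrow> complex mat"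
  assumes "qstate d \<sigma>"
    and "\<gamma> > 0"
    and "psd_mat d (\<sigma> - complex_of_real \<gamma> \<cdot>\<^sub>m 1\<^sub>m d)"
    and "T > 0"
    and "\<And>t. t \<in> {1..T} \<Longrightarrow> qstate d (\<rho>s t)"
  shows "(let \<rho> = mat d d (\<lambda>ij. (1 / of_nat T) * (\<Sum>t = 1..T. \<rho>s t $$ ij)) in
          (1 / real T) * (\<Sum>t = 1..T. 1 + bures_chi2 d (\<rho>s t) \<sigma>)
            \<le> sqrt (real d / \<gamma>) * sqrt (bures_chi2 d \<rho> \<sigma>) + real d)"
proof -
  have \<sigma>p: "psd_mat d \<sigma>" and \<sigma>tr: "(\<Sum>i<d. \<sigma>$$(i,i)) = 1" using assms(1) unfolding qstate_def by auto
  have \<sigma>c: "\<sigma> \<in> carrier_mat d d" and \<sigma>h: "adj \<sigma> = \<sigma>" using \<sigma>p unfolding psd_mat_def by auto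
  define P where "P = (\<lambda>(U, q). unitary_mat d U \<and> \<sigma> = U * real_diag_mat d q * adj U)"
  have ex: "\<exists>x. P x" using spectral[OF \<sigma>c \<sigma>h] unfolding P_def by auto
  define Uq where "Uq = (SOME x. P x)"
  have PUq: "P Uq" unfolding Uq_def by (rule someI_ex[OF ex])
  define U where "U = fst Uq"
  define q where "q = snd Uq"
  have Uu: "unitary_mat d U" and \<sigma>e: "\<sigma> = U * real_diag_mat d q * adj U"
    using PUq unfolding P_def U_def q_def by (auto split: prod.splits)
  have U: "U \<in> carrier_mat d d" using Uu unfolding unitary_mat_def by auto
  have bc: "bures_chi2 d X \<sigma> = chi2_expr d X U q" for X
    unfolding bures_chi2_def Let_def U_def q_def Uq_def P_def ..
  have ce: "chi2_expr d X U q
      = (\<Sum>i<d. \<Sum>j<d. 2 / (q i + q j) * (cmod ((adj U * X * U) $$ (i,j)))\<^sup>2) - 1" for X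
    unfolding chi2_expr_def Let_def ..
  have qge: "q i \<ge> \<gamma>" if "i < d" for i using q_lower[OF Uu \<sigma>e assms(3) that] .
  have qp: "q i > 0" if "i < d" for i using qge[OF that] assms(2) by simp
  have qsum: "(\<Sum>i<d. q i) = 1"
  proof -
    have "(\<Sum>i<d. (adj U * \<sigma> * U) $$ (i,i)) = 1" using trace_inv[OF \<sigma>c Uu] \<sigma>tr by simp
    moreover have "(adj U * \<sigma> * U) $$ (i,i) = complex_of_real (q i)" if "i < d" for i
      unfolding diag_of_decomp[OF Uu \<sigma>e] using that by (simp add: real_diag_mat_def)
    ultimately have "(\<Sum>i<d. complex_of_real (q i)) = 1" by simp
    hence "Re (\<Sum>i<d. complex_of_real (q i)) = 1" by simp
    thus ?thesis by simp
  qed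
  have \<rho>p: "psd_mat d (\<rho>s t)" and \<rho>tr: "(\<Sum>i<d. \<rho>s t $$ (i,i)) = 1"
    and \<rho>c: "\<rho>s t \<in> carrier_mat d d" if "t \<in> {1..T}" for t
    using assms(5)[OF that] unfolding qstate_def psd_mat_def by auto
  define a where "a = (\<lambda>t i. Re ((adj U * \<rho>s t * U) $$ (i,i)))"
  define \<rho> where "\<rho> = mat d d (\<lambda>ij. (1 / of_nat T) * (\<Sum>t = 1..T. \<rho>s t $$ ij))"
  define abar where "abar = (\<lambda>i. Re ((adj U * \<rho> * U) $$ (i,i)))"
  have stepA: "1 + bures_chi2 d (\<rho>s t) \<sigma> \<le> (\<Sum>i<d. a t i / q i)" if t: "t \<in> {1..T}" for t
    unfolding bc ce a_def using chi2_sum_bound[OF \<rho>p[OF t] \<rho>tr[OF t] Uu qp] by simp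
  have A: "(1 / real T) * (\<Sum>t = 1..T. 1 + bures_chi2 d (\<rho>s t) \<sigma>)
      \<le> (1 / real T) * (\<Sum>t = 1..T. \<Sum>i<d. a t i / q i)"
    using stepA by (intro mult_left_mono sum_mono) auto
  have abar_eq: "abar i = (1 / real T) * (\<Sum>t = 1..T. a t i)" if i: "i < d" for i
  proof -
    have "(adj U * \<rho> * U) $$ (i,i) = (1 / of_nat T) * (\<Sum>t = 1..T. (adj U * \<rho>s t * U) $$ (i,i))"
      unfolding \<rho>_def by (rule avg_entry[OF U i i \<rho>c])
    also have "(1 / of_nat T :: complex) = complex_of_real (1 / real T)" by simp
    finally have "(adj U * \<rho> * U) $$ (i,i)
        = complex_of_real (1 / real T) * (\<Sum>t = 1..T. (adj U * \<rho>s t * U) $$ (i,i))" .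
    thus ?thesis unfolding abar_def a_def by simp
  qed
  have B: "(1 / real T) * (\<Sum>t = 1..T. \<Sum>i<d. a t i / q i) = (\<Sum>i<d. abar i / q i)"
  proof -
    have "(1 / real T) * (\<Sum>t = 1..T. \<Sum>i<d. a t i / q i) = (1 / real T) * (\<Sum>i<d. \<Sum>t = 1..T. a t i / q i)"
      by (simp only: sum.swap[of _ "{1..T}"])
    also have "\<dots> = (\<Sum>i<d. ((1 / real T) * (\<Sum>t = 1..T. a t i)) / q i)"
      by (simp add: sum_distrib_left sum_divide_distrib)
    also have "\<dots> = (\<Sum>i<d. abar i / q i)" using abar_eq by simp
    finally show ?thesis .
  qed
  have asum_t: "(\<Sum>i<d. a t i) = 1" if t: "t \<in> {1..T}" for t
  proof -
    have "(\<Sum>i<d. a t i) = Re (\<Sum>i<d. (adj U * \<rho>s t * U) $$ (i,i))" unfolding a_def by simp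
    also have "(\<Sum>i<d. (adj U * \<rho>s t * U) $$ (i,i)) = 1"
      using trace_inv[OF \<rho>c[OF t] Uu] \<rho>tr[OF t] by simp
    finally show ?thesis by simp
  qed
  have abar_sum: "(\<Sum>i<d. abar i) = 1"
  proof -
    have "(\<Sum>i<d. abar i) = (\<Sum>i<d. (1 / real T) * (\<Sum>t = 1..T. a t i))" using abar_eq by simp
    also have "\<dots> = (1 / real T) * (\<Sum>i<d. \<Sum>t = 1..T. a t i)"
      by (simp only: sum_distrib_left)
    also have "\<dots> = (1 / real T) * (\<Sum>t = 1..T. \<Sum>i<d. a t i)"
      by (rule arg_cong[of _ _ "\<lambda>x. (1 / real T) * x"], rule sum.swap)
    also have "\<dots> = (1 / real T) * (\<Sum>t = 1..T. 1)" using asum_t by simp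
    also have "\<dots> = 1" using assms(4) by simp
    finally show ?thesis .
  qed
  have D: "(\<Sum>i<d. (abar i)\<^sup>2 / q i) - 1 \<le> bures_chi2 d \<rho> \<sigma>"
  proof -
    define f where "f = (\<lambda>i j. 2 / (q i + q j) * (cmod ((adj U * \<rho> * U) $$ (i,j)))\<^sup>2)"
    have f0: "f i j \<ge> 0" if "i < d" "j < d" for i j
      unfolding f_def using qp[OF that(1)] qp[OF that(2)] by simp
    have "(\<Sum>i<d. (abar i)\<^sup>2 / q i) \<le> (\<Sum>i<d. f i i)"
    proof (intro sum_mono)
      fix i assume "i \<in> {..<d}"
      hence i: "i < d" by simp
      have "(abar i)\<^sup>2 \<le> (cmod ((adj U * \<rho> * U) $$ (i,i)))\<^sup>2"
        unfolding abar_def by (simp add: cmod_power2)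
      hence "(abar i)\<^sup>2 / q i \<le> (cmod ((adj U * \<rho> * U) $$ (i,i)))\<^sup>2 / q i"
        using qp[OF i] by (simp add: divide_right_mono)
      also have "\<dots> = f i i" unfolding f_def using qp[OF i] by simp
      finally show "(abar i)\<^sup>2 / q i \<le> f i i" .
    qed
    also have "\<dots> \<le> (\<Sum>i<d. \<Sum>j<d. f i j)"
    proof (intro sum_mono)
      fix i assume "i \<in> {..<d}"
      thus "f i i \<le> (\<Sum>j<d. f i j)" using f0 by (intro member_le_sum) auto
    qed
    finally show ?thesis unfolding bc ce f_def by simp
  qed
  have "(1 / real T) * (\<Sum>t = 1..T. 1 + bures_chi2 d (\<rho>s t) \<sigma>)
      \<le> sqrt (real d / \<gamma>) * sqrt (bures_chi2 d \<rho> \<sigma>) + real d"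
    using A B final_real[OF qge assms(2) qsum abar_sum D] by simp
  thus ?thesis unfolding \<rho>_def Let_def .
qed

end
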